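(* Let $\Sigma=\{c_1\prec\dots\prec c_\sigma\}$, $n\ge1$, and nonnegative integers $n_c$ ($c\in\Sigma$) with $\sum_c n_c=n-1$ be given, and let $\mathcal U$, $\mathcal M$, $f$ be as in the context. For every matrix $M\in\mathcal M$, its $n$ rotations $M^0,M^1,\dots,M^{n-1}$ are pairwise distinct, and exactly one of them belongs to $f(\mathcal U)$.
   Context: A trie over a finite totally ordered alphabet $\Sigma$ is a rooted ordered tree with edges labeled by symbols of $\Sigma$ such that edges leaving the same node have distinct labels and siblings are ordered by their incoming labels; $out(u)$ denotes the set of labels of edges leaving node $u$. $\mathcal U$ is the set of tries with $n$ nodes over $\Sigma$ in which exactly $n_c$ edges are labeled $c$, for every $c$. $\mathcal M$ is the set of all $\sigma\times n$ binary matrices whose $i$-th row contains exactly $n_{c_i}$ ones, for every $i\in[\sigma]$. The map $f:\mathcal U\to\mathcal M$ sends a trie with nodes $u_1,\dots,u_n$ in pre-order (children visited in increasing label order) to the matrix $M$ with $M[i][j]=1$ iff $c_i\in out(u_j)$. For $M\in\mathcal M$ and integer $r\ge0$, the $r$-th rotation $M^r$ is the matrix whose $j$-th column is the $((j+r-1)\bmod n)+1$-th column of $M$, for every $j\in[n]$. *)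

theory Defs
  imports Main
begin

text \<open>The alphabet is {0..<sigma} with the natural order (c_i corresponds to i-1).
  A trie is an ordered tree whose children are listed together with the labels
  of their incoming edges.\<close>

datatype trie = Node "(nat \<times> trie) list"

fun wf_trie :: "nat \<Rightarrow> trie \<Rightarrow> bool" where
  "wf_trie \<sigma> (Node cs) =
     (sorted_wrt (<) (map fst cs) \<and> (\<forall>p\<in>set cs. fst p < \<sigma> \<and> wf_trie \<sigma> (snd p)))"

fun pre_outs :: "trie \<Rightarrow> nat set list" where
  "pre_outs (Node cs) = set (map fst cs) # concat (map (\<lambda>p. pre_outs (snd p)) cs)"

definition num_nodes :: "trie \<Rightarrow> nat" where
  "num_nodes t = length (pre_outs t)"

fun edge_count :: "nat \<Rightarrow> trie \<Rightarrow> nat" where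
  "edge_count c (Node cs) =
     length (filter (\<lambda>p. fst p = c) cs) + sum_list (map (\<lambda>p. edge_count c (snd p)) cs)"

definition tries_U :: "nat \<Rightarrow> nat \<Rightarrow> (nat \<Rightarrow> nat) \<Rightarrow> trie set" where
  "tries_U \<sigma> n nc = {t. wf_trie \<sigma> t \<and> num_nodes t = n \<and> (\<forall>c<\<sigma>. edge_count c t = nc c)}"

text \<open>Binary sigma x n matrices, 0-indexed rows i < sigma and columns j < n,
  represented as predicates that are False outside the index range.\<close>
type_synonym bmat = "nat \<Rightarrow> nat \<Rightarrow> bool"

definition mats_M :: "nat \<Rightarrow> nat \<Rightarrow> (nat \<Rightarrow> nat) \<Rightarrow> bmat set" where
  "mats_M \<sigma> n nc = {M. (\<forall>i j. M i j \<longrightarrow> i < \<sigma> \<and> j < n) \<and>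
                         (\<forall>i<\<sigma>. card {j. j < n \<and> M i j} = nc i)}"

definition trie_matrix :: "nat \<Rightarrow> trie \<Rightarrow> bmat" where
  "trie_matrix \<sigma> t = (\<lambda>i j. i < \<sigma> \<and> j < length (pre_outs t) \<and> i \<in> pre_outs t ! j)"

text \<open>r-th rotation: column j (0-based) of M^r is column (j + r) mod n of M
  (the 1-based formula ((j+r-1) mod n)+1 shifted to 0-based indices).\<close>
definition rot :: "nat \<Rightarrow> bmat \<Rightarrow> nat \<Rightarrow> bmat" where
  "rot n M r = (\<lambda>i j. j < n \<and> M i ((j + r) mod n))"

end

theory Submission
  imports Defs
begin

definition exc :: "nat set list \<Rightarrow> int" where
  "exc L = sum_list (map (\<lambda>S. int (card S) - 1) L)"

definition FF :: "nat \<Rightarrow> nat set list \<Rightarrow> bool" where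
  "FF k L \<longleftrightarrow> (\<forall>m<length L. 0 < int k + exc (take m L)) \<and> int k + exc L = 0"

lemma exc_simps[simp]: "exc [] = 0" "exc (S # L) = int (card S) - 1 + exc L"
  "exc (xs @ ys) = exc xs + exc ys"
  by (simp_all add: exc_def)

lemma FF_Nil: "FF k [] \<longleftrightarrow> k = 0"
  by (simp add: FF_def)

lemma FF_Cons: "FF k (S # L) \<longleftrightarrow> 0 < k \<and> FF (k - 1 + card S) L"
proof
  assume h: "FF k (S # L)"
  have k: "0 < k" using h unfolding FF_def by (metis length_greater_0_conv list.distinct(1) of_nat_0_less_iff add_0_right exc_simps(1) take_0)
  have "FF (k - 1 + card S) L"
    unfolding FF_def
  proof (intro conjI allI impI)
    fix m assume "m < length L"
    then have "0 < int k + exc (take (Suc m) (S # L))" using h unfolding FF_def by auto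
    then show "0 < int (k - 1 + card S) + exc (take m L)" using k by simp
  next
    show "int (k - 1 + card S) + exc L = 0" using h k unfolding FF_def by simp
  qed
  then show "0 < k \<and> FF (k - 1 + card S) L" using k by simp
next
  assume h: "0 < k \<and> FF (k - 1 + card S) L"
  show "FF k (S # L)" unfolding FF_def
  proof (intro conjI allI impI)
    fix m assume m: "m < length (S # L)"
    show "0 < int k + exc (take m (S # L))"
    proof (cases m)
      case 0 then show ?thesis using h by simp
    next
      case (Suc m')
      then have "m' < length L" using m by simp
      then have "0 < int (k - 1 + card S) + exc (take m' L)" using h unfolding FF_def by auto
      then show ?thesis using Suc h by simp
    qed
  next
    have "int (k - 1 + card S) + exc L = 0" using h unfolding FF_def by blast
    then show "int k + exc (S # L) = 0" using h by simp
  qed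
qed

lemma forest_FF:
  "\<forall>ts. (\<forall>t\<in>set ts. wf_trie \<sigma> t) \<longrightarrow> length (concat (map pre_outs ts)) = N
     \<longrightarrow> FF (length ts) (concat (map pre_outs ts))"
proof (induction N)
  case 0
  show ?case
  proof (intro allI impI)
    fix ts :: "trie list" assume "length (concat (map pre_outs ts)) = 0"
    then have "ts = []"
      by (metis Nil_is_append_conv concat.simps(2) length_0_conv list.distinct(1) map_eq_Cons_conv neq_Nil_conv pre_outs.elims)
    then show "FF (length ts) (concat (map pre_outs ts))" by (simp add: FF_Nil)
  qed
next
  case (Suc N)
  show ?case
  proof (intro allI impI)
    fix ts :: "trie list"
    assume w: "\<forall>t\<in>set ts. wf_trie \<sigma> t" and l: "length (concat (map pre_outs ts)) = Suc N"
    then obtain t ts' where ts: "ts = t # ts'" by (cases ts) auto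
    obtain cs where t: "t = Node cs" by (cases t)
    have wt: "wf_trie \<sigma> t" using w ts by simp
    have dist: "distinct (map fst cs)" using wt t strict_sorted_iff by auto
    have eq: "concat (map pre_outs ts) = set (map fst cs) # concat (map pre_outs (map snd cs @ ts'))"
      using ts t by (simp add: comp_def)
    have w2: "\<forall>t\<in>set (map snd cs @ ts'). wf_trie \<sigma> t" using w ts t wt by auto
    have l2: "length (concat (map pre_outs (map snd cs @ ts'))) = N" using l eq by simp
    have F2: "FF (length (map snd cs @ ts')) (concat (map pre_outs (map snd cs @ ts')))"
      using Suc.IH w2 l2 by blast
    have c: "card (set (map fst cs)) = length cs" using distinct_card[OF dist] by simp
    show "FF (length ts) (concat (map pre_outs ts))"
      unfolding eq using F2 c ts by (simp add: FF_Cons add.commute)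
  qed
qed

lemma FF_forest:
  "FF k L \<Longrightarrow> (\<forall>S\<in>set L. S \<subseteq> {..<\<sigma>}) \<Longrightarrow>
   \<exists>ts. length ts = k \<and> (\<forall>t\<in>set ts. wf_trie \<sigma> t) \<and> concat (map pre_outs ts) = L"
proof (induction L arbitrary: k)
  case Nil then show ?case by (simp add: FF_Nil)
next
  case (Cons S L)
  have kk: "0 < k \<and> FF (k - 1 + card S) L" using Cons.prems(1) by (simp only: FF_Cons)
  then have k: "0 < k" and F': "FF (k - 1 + card S) L" by auto
  from Cons.IH[OF F'] Cons.prems(2) obtain ts' where l: "length ts' = k - 1 + card S"
    and w: "\<forall>t\<in>set ts'. wf_trie \<sigma> t" and c: "concat (map pre_outs ts') = L" by auto
  define d where "d = card S"
  define xs where "xs = sorted_list_of_set S"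
  have fin: "finite S" using Cons.prems(2) finite_subset by auto
  have xs: "set xs = S" "length xs = d" "sorted_wrt (<) xs"
    using fin by (simp_all add: xs_def d_def strict_sorted_list_of_set)
  have lt: "length (take d ts') = d" using l d_def by simp
  define t where "t = Node (zip xs (take d ts'))"
  have po: "pre_outs t = S # concat (map pre_outs (take d ts'))"
  proof -
    have "map (\<lambda>p. pre_outs (snd p)) (zip xs (take d ts')) = map pre_outs (map snd (zip xs (take d ts')))"
      by simp
    also have "\<dots> = map pre_outs (take d ts')" using xs(2) lt by simp
    finally show ?thesis unfolding t_def using xs lt by simp
  qed
  have wt: "wf_trie \<sigma> t"
  proof -
    have "\<forall>p\<in>set (zip xs (take d ts')). fst p < \<sigma> \<and> wf_trie \<sigma> (snd p)"
    proof
      fix p assume p: "p \<in> set (zip xs (take d ts'))"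
      obtain a b where ab: "p = (a, b)" by (cases p)
      have "a \<in> set xs" using p ab set_zip_leftD by fastforce
      then have "a < \<sigma>" using xs(1) Cons.prems(2) by auto
      moreover have "b \<in> set ts'" using p ab set_zip_rightD in_set_takeD by fastforce
      ultimately show "fst p < \<sigma> \<and> wf_trie \<sigma> (snd p)" using w ab by auto
    qed
    then show ?thesis unfolding t_def using xs lt by simp
  qed
  show ?case
  proof (intro exI conjI)
    show "length (t # drop d ts') = k" using l d_def k by simp
    show "\<forall>t\<in>set (t # drop d ts'). wf_trie \<sigma> t" using wt w by (auto dest: in_set_dropD)
    have "concat (map pre_outs (t # drop d ts')) = S # concat (map pre_outs (take d ts' @ drop d ts'))"
      using po by (simp only: list.map concat.simps map_append concat_append append_Cons)
    then show "concat (map pre_outs (t # drop d ts')) = S # L" using c by simp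
  qed
qed

lemma len_filter_eq: "distinct xs \<Longrightarrow> length (filter (\<lambda>x. x = c) xs) = (if c \<in> set xs then 1 else 0)"
  by (induction xs) auto

lemma len_filter_concat: "length (filter P (concat xss)) = sum_list (map (\<lambda>xs. length (filter P xs)) xss)"
  by (induction xss) auto

lemma edge_count_pre_outs:
  "wf_trie \<sigma> t \<Longrightarrow> edge_count c t = length (filter (\<lambda>S. c \<in> S) (pre_outs t))"
proof (induction \<sigma> t rule: wf_trie.induct)
  case (1 \<sigma> cs)
  have dist: "distinct (map fst cs)" using "1.prems" strict_sorted_iff by auto
  have a: "length (filter (\<lambda>p. fst p = c) cs) = (if c \<in> set (map fst cs) then 1 else 0)"
    using len_filter_eq[OF dist, of c] by (simp add: length_filter_map[symmetric] comp_def)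
  have b: "map (\<lambda>p. edge_count c (snd p)) cs = map (\<lambda>p. length (filter (\<lambda>S. c \<in> S) (pre_outs (snd p)))) cs"
    using "1.IH" "1.prems" by auto
  show ?case using a arg_cong[OF b, of sum_list] by (simp add: len_filter_concat comp_def)
qed

lemma pre_outs_bound: "wf_trie \<sigma> t \<Longrightarrow> \<forall>S\<in>set (pre_outs t). S \<subseteq> {..<\<sigma>}"
  by (induction \<sigma> t rule: wf_trie.induct) auto

lemma rot_count:
  assumes "0 < (n::nat)"
  shows "card {j. j < n \<and> P ((j + r) mod n)} = card {j. j < n \<and> P j}"
proof -
  let ?g = "\<lambda>j. (j + r) mod n"
  have inj: "inj_on ?g {..<n}"
  proof (rule inj_onI)
    fix x y assume x: "x \<in> {..<n}" and y: "y \<in> {..<n}" and e: "?g x = ?g y"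
    show "x = y"
    proof (rule ccontr)
      assume "x \<noteq> y"
      then consider "x < y" | "y < x" by linarith
      then show False
      proof cases
        case 1
        then have "n dvd (y + r) - (x + r)" using e mod_eq_dvd_iff_nat[of "x+r" "y+r" n] by simp
        then have "n dvd y - x" by simp
        then show False using 1 y by (auto dest: dvd_imp_le)
      next
        case 2
        then have "n dvd (x + r) - (y + r)" using e mod_eq_dvd_iff_nat[of "y+r" "x+r" n] by simp
        then have "n dvd x - y" by simp
        then show False using 2 x by (auto dest: dvd_imp_le)
      qed
    qed
  qed
  have im: "?g ` {..<n} = {..<n}"
    by (rule endo_inj_surj) (use inj assms in auto)
  have "{j. j < n \<and> P j} = ?g ` {j. j < n \<and> P (?g j)}"
  proof
    show "{j. j < n \<and> P j} \<subseteq> ?g ` {j. j < n \<and> P (?g j)}"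
    proof
      fix k assume k: "k \<in> {j. j < n \<and> P j}"
      then have "k \<in> ?g ` {..<n}" using im by simp
      then obtain j where "j < n" "k = ?g j" by auto
      then show "k \<in> ?g ` {j. j < n \<and> P (?g j)}" using k by auto
    qed
    show "?g ` {j. j < n \<and> P (?g j)} \<subseteq> {j. j < n \<and> P j}" using assms by auto
  qed
  moreover have "card (?g ` {j. j < n \<and> P (?g j)}) = card {j. j < n \<and> P (?g j)}"
    by (rule card_image) (rule inj_on_subset[OF inj], auto)
  ultimately show ?thesis by simp
qed

lemma card_filter_sum:
  assumes "finite A"
  shows "card {x\<in>A. P x} = (\<Sum>x\<in>A. if P x then 1 else (0::nat))"
proof -
  have "card {x\<in>A. P x} = (\<Sum>x\<in>{x\<in>A. P x}. 1::nat)" by (rule card_eq_sum)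
  also have "\<dots> = (\<Sum>x\<in>A. if P x then 1 else (0::nat))" by (rule sum.inter_filter[OF assms])
  finally show ?thesis .
qed

lemma exc_upt: "exc (map f [0..<m]) = (\<Sum>j<m. int (card (f j)) - 1)"
  by (induction m) auto

theorem corollary1:
  fixes \<sigma> n :: nat and nc :: "nat \<Rightarrow> nat" and M :: bmat
  assumes "n \<ge> 1"
    and "(\<Sum>c<\<sigma>. nc c) = n - 1"
    and "M \<in> mats_M \<sigma> n nc"
  shows "inj_on (rot n M) {..<n}
         \<and> (\<exists>!r. r < n \<and> rot n M r \<in> trie_matrix \<sigma> ` tries_U \<sigma> n nc)"
proof -
  have supp: "\<And>i j. M i j \<Longrightarrow> i < \<sigma> \<and> j < n"
    and cnt: "\<And>i. i < \<sigma> \<Longrightarrow> card {j. j < n \<and> M i j} = nc i"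
    using assms(3) unfolding mats_M_def by auto
  have npos: "0 < n" using assms(1) by simp
  define C where "C j = {i. M i (j mod n)}" for j
  define D where "D j = int (card (C j))" for j
  define s where "s m = (\<Sum>j<m. D j - 1)" for m
  define G where "G r \<longleftrightarrow> (\<forall>m<n. 0 \<le> (\<Sum>j<m. D (r + j) - 1))" for r
  have Csub: "C j \<subseteq> {..<\<sigma>}" for j using supp unfolding C_def by auto
  have tot: "(\<Sum>j<n. card (C j)) = n - 1"
  proof -
    have "(\<Sum>j<n. card (C j)) = (\<Sum>j<n. \<Sum>i<\<sigma>. if M i j then 1 else (0::nat))"
    proof (rule sum.cong[OF refl])
      fix j assume "j \<in> {..<n}"
      then have "C j = {i \<in> {..<\<sigma>}. M i j}" unfolding C_def using supp by auto
      then show "card (C j) = (\<Sum>i<\<sigma>. if M i j then 1 else 0)"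
        using card_filter_sum[of "{..<\<sigma>}" "\<lambda>i. M i j"] by simp
    qed
    also have "\<dots> = (\<Sum>i<\<sigma>. \<Sum>j<n. if M i j then 1 else (0::nat))" by (rule sum.swap)
    also have "\<dots> = (\<Sum>i<\<sigma>. nc i)"
    proof (rule sum.cong[OF refl])
      fix i assume i: "i \<in> {..<\<sigma>}"
      have "(\<Sum>j<n. if M i j then 1 else (0::nat)) = card {j \<in> {..<n}. M i j}"
        using card_filter_sum[of "{..<n}" "\<lambda>j. M i j"] by simp
      also have "\<dots> = card {j. j < n \<and> M i j}" by (rule arg_cong[of _ _ card]) auto
      finally show "(\<Sum>j<n. if M i j then 1 else (0::nat)) = nc i" using cnt i by simp
    qed
    finally show ?thesis using assms(2) by simp
  qed
  have sSuc: "s (Suc m) = s m + (D m - 1)" for m by (simp add: s_def)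
  have Dper: "D (j + n) = D j" for j unfolding D_def C_def by simp
  have Dmod: "D (r mod n + j) = D (r + j)" for r j unfolding D_def C_def by (simp add: mod_add_left_eq)
  have sn: "s n = -1"
  proof -
    have "s n = (\<Sum>j<n. D j) - int n" by (simp add: s_def sum_subtractf)
    also have "(\<Sum>j<n. D j) = int (\<Sum>j<n. card (C j))" by (simp add: D_def)
    finally show ?thesis using tot npos by simp
  qed
  have sshift: "s (r + m) = s r + (\<Sum>j<m. D (r + j) - 1)" for r m
    by (induction m) (simp_all add: sSuc)
  have sper: "s (k + n) = s k - 1" for k
  proof (induction k)
    case 0 then show ?case using sn by (simp add: s_def)
  next
    case (Suc k)
    have "s (Suc k + n) = s (Suc (k + n))" by simp
    also have "\<dots> = s (k + n) + (D (k + n) - 1)" by (rule sSuc)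
    finally show ?case using Suc Dper[of k] sSuc[of k] by (simp add: add.commute)
  qed
  have Gs: "G r \<longleftrightarrow> (\<forall>m<n. s r \<le> s (r + m))" for r
    unfolding G_def using sshift by auto
  have Gmod: "G (r mod n) \<longleftrightarrow> G r" for r unfolding G_def using Dmod by simp
  have uniq: "a = b" if "G a" "G b" "a < n" "b < n" for a b
  proof (rule ccontr)
    assume "a \<noteq> b"
    have *: False if "G x" "G y" "x < y" "y < n" for x y
    proof -
      have "\<forall>m<n. s x \<le> s (x + m)" using that(1) Gs by blast
      moreover have "y - x < n" using that by linarith
      ultimately have "s x \<le> s (x + (y - x))" by blast
      then have 1: "s x \<le> s y" using that by simp
      have "\<forall>m<n. s y \<le> s (y + m)" using that(2) Gs by blast
      moreover have "x + n - y < n" using that by linarith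
      ultimately have "s y \<le> s (y + (x + n - y))" by blast
      then have "s y \<le> s (x + n)" using that by simp
      then show False using 1 sper[of x] by simp
    qed
    show False using *[of a b] *[of b a] that \<open>a \<noteq> b\<close> by linarith
  qed
  have exist: "\<exists>r<n. G r"
  proof -
    define \<mu> where "\<mu> = Min (s ` {..<n})"
    have "\<mu> \<in> s ` {..<n}" unfolding \<mu>_def using npos by (intro Min_in) auto
    then have ex: "\<exists>k. k < n \<and> s k = \<mu>" by auto
    define r where "r = (LEAST k. k < n \<and> s k = \<mu>)"
    have r: "r < n" "s r = \<mu>" using LeastI_ex[OF ex] unfolding r_def by auto
    have mu_le: "\<mu> \<le> s k" if "k < n" for k unfolding \<mu>_def using that by (intro Min_le) auto
    have "G r" unfolding Gs
    proof (intro allI impI)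
      fix m assume m: "m < n"
      show "s r \<le> s (r + m)"
      proof (cases "r + m < n")
        case True then show ?thesis using mu_le r by simp
      next
        case False
        define k where "k = r + m - n"
        have k: "k < r" "r + m = k + n" using m False unfolding k_def by auto
        have "s k \<noteq> \<mu>"
        proof
          assume "s k = \<mu>"
          then have "r \<le> k" unfolding r_def using k r(1) by (intro Least_le) simp
          then show False using k by simp
        qed
        then have "\<mu> < s k" using mu_le[of k] k r(1) by simp
        then show ?thesis using k sper[of k] r by simp
      qed
    qed
    then show ?thesis using r by auto
  qed
  have rotM: "rot n M r \<in> mats_M \<sigma> n nc" for r
  proof -
    have "card {j. j < n \<and> rot n M r i j} = nc i" if "i < \<sigma>" for i
    proof -
      have "card {j. j < n \<and> rot n M r i j} = card {j. j < n \<and> M i ((j + r) mod n)}"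
        unfolding rot_def by (rule arg_cong[of _ _ card]) auto
      also have "\<dots> = card {j. j < n \<and> M i j}" by (rule rot_count[OF npos])
      finally show ?thesis using cnt that by simp
    qed
    moreover have "rot n M r i j \<Longrightarrow> i < \<sigma> \<and> j < n" for i j unfolding rot_def using supp by auto
    ultimately show ?thesis unfolding mats_M_def by auto
  qed
  define L where "L r = map (\<lambda>j. C (j + r)) [0..<n]" for r
  have excL: "exc (take m (L r)) = (\<Sum>j<m. D (r + j) - 1)" if "m \<le> n" for m r
  proof -
    have "take m (L r) = map (\<lambda>j. C (j + r)) [0..<m]" unfolding L_def using that
      by (simp add: take_map take_upt)
    then show ?thesis by (simp add: exc_upt D_def add.commute)
  qed
  have FFG: "FF 1 (L r) \<longleftrightarrow> G r" for r
  proof -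
    have len: "length (L r) = n" unfolding L_def by simp
    have tot: "1 + exc (L r) = 0"
      using excL[of n r] sshift[of r n] sper[of r] by (simp add: len add.commute)
    have "FF 1 (L r) \<longleftrightarrow> (\<forall>m<n. 0 < 1 + exc (take m (L r)))"
      unfolding FF_def using tot len by simp
    also have "\<dots> \<longleftrightarrow> G r" unfolding G_def using excL by auto
    finally show ?thesis .
  qed
  have link: "rot n M r \<in> trie_matrix \<sigma> ` tries_U \<sigma> n nc \<longleftrightarrow> G r" for r
  proof
    assume "rot n M r \<in> trie_matrix \<sigma> ` tries_U \<sigma> n nc"
    then obtain t where t: "t \<in> tries_U \<sigma> n nc" and e: "rot n M r = trie_matrix \<sigma> t" by auto
    have wt: "wf_trie \<sigma> t" and lt: "length (pre_outs t) = n"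
      using t unfolding tries_U_def num_nodes_def by auto
    have "pre_outs t = L r"
    proof (rule nth_equalityI)
      show "length (pre_outs t) = length (L r)" using lt unfolding L_def by simp
      fix j assume j: "j < length (pre_outs t)"
      have bnd: "pre_outs t ! j \<subseteq> {..<\<sigma>}" using pre_outs_bound[OF wt] j by auto
      have "i \<in> pre_outs t ! j \<longleftrightarrow> i \<in> C (j + r)" for i
      proof -
        have "rot n M r i j = trie_matrix \<sigma> t i j" using e by simp
        then show ?thesis using bnd j lt unfolding rot_def trie_matrix_def C_def by auto
      qed
      then show "pre_outs t ! j = L r ! j" using j lt unfolding L_def by auto
    qed
    moreover have "FF (length [t]) (concat (map pre_outs [t]))"
      using forest_FF[of \<sigma> "length (pre_outs t)", rule_format, of "[t]"] wt by simp
    moreover have "concat (map pre_outs [t]) = pre_outs t" by simp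
    ultimately show "G r" using FFG by simp
  next
    assume "G r"
    then have "FF 1 (L r)" using FFG by simp
    moreover have "\<forall>S\<in>set (L r). S \<subseteq> {..<\<sigma>}" unfolding L_def using Csub by auto
    ultimately obtain ts where ts: "length ts = 1" "\<forall>t\<in>set ts. wf_trie \<sigma> t"
      "concat (map pre_outs ts) = L r" using FF_forest by blast
    then obtain t where tt: "ts = [t]" by (metis One_nat_def length_0_conv length_Suc_conv)
    have wt: "wf_trie \<sigma> t" and po: "pre_outs t = L r" using ts tt by auto
    have lt: "length (pre_outs t) = n" using po unfolding L_def by simp
    have ec: "edge_count c t = nc c" if "c < \<sigma>" for c
    proof -
      have "edge_count c t = card {j. j < n \<and> c \<in> L r ! j}"
        using edge_count_pre_outs[OF wt] po lt length_filter_conv_card by metis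
      also have "\<dots> = card {j. j < n \<and> rot n M r c j}"
        unfolding L_def rot_def C_def by (rule arg_cong[of _ _ card]) auto
      also have "\<dots> = nc c" using rotM[of r] that unfolding mats_M_def by auto
      finally show ?thesis .
    qed
    have "t \<in> tries_U \<sigma> n nc" unfolding tries_U_def num_nodes_def using wt lt ec by auto
    moreover have "trie_matrix \<sigma> t = rot n M r"
    proof (intro ext)
      fix i j
      show "trie_matrix \<sigma> t i j = rot n M r i j"
        unfolding trie_matrix_def rot_def po L_def C_def using supp by auto
    qed
    ultimately show "rot n M r \<in> trie_matrix \<sigma> ` tries_U \<sigma> n nc" by force
  qed
  have part2: "\<exists>!r. r < n \<and> rot n M r \<in> trie_matrix \<sigma> ` tries_U \<sigma> n nc"
    using exist uniq link by blast
  have part1: "inj_on (rot n M) {..<n}"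
  proof (rule inj_onI)
    fix a b assume a: "a \<in> {..<n}" and b: "b \<in> {..<n}" and e: "rot n M a = rot n M b"
    have Cab: "C (j + a) = C (j + b)" if "j < n" for j
    proof -
      have "M i ((j + a) mod n) = M i ((j + b) mod n)" for i
        using fun_cong[OF fun_cong[OF e, of i], of j] that unfolding rot_def by simp
      then show ?thesis unfolding C_def by auto
    qed
    have Cab': "C (j + a) = C (j + b)" for j
    proof -
      have "C (j + a) = C (j mod n + a)" unfolding C_def by (simp add: mod_add_left_eq)
      also have "\<dots> = C (j mod n + b)" using Cab npos by simp
      also have "\<dots> = C (j + b)" unfolding C_def by (simp add: mod_add_left_eq)
      finally show ?thesis .
    qed
    have Dab: "D (x + a + j) = D (x + b + j)" for x j
    proof -
      have e1: "x + a + j = (x + j) + a" and e2: "x + b + j = (x + j) + b" by simp_all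
      show ?thesis unfolding D_def e1 e2 Cab'[of "x + j"] ..
    qed
    have Gab: "G (x + a) \<longleftrightarrow> G (x + b)" for x
      unfolding G_def using Dab[of x] by simp
    obtain r0 where r0: "r0 < n" "G r0" using exist by blast
    define x where "x = r0 + n - a"
    have "x + a = r0 + n" using a unfolding x_def by simp
    then have "G (x + a)" using Gmod[of "r0 + n"] r0 by simp
    then have "G (x + b)" using Gab by simp
    then have "G ((x + b) mod n)" using Gmod by simp
    then have m: "(x + b) mod n = r0" using uniq[of "(x + b) mod n" r0] r0 npos by simp
    obtain q where q: "x + b = q * n + r0" using m div_mult_mod_eq[of "x + b" n] by metis
    have an: "a < n" and bn: "b < n" using a b by auto
    have qn: "q * n = n - a + b" using q an unfolding x_def by linarith
    show "a = b"
    proof (cases q)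
      case 0
      then have "n - a + b = 0" using qn by simp
      then show ?thesis using an by linarith
    next
      case (Suc q')
      show ?thesis
      proof (cases q')
        case 0 then show ?thesis using qn an Suc by simp
      next
        case (Suc q'')
        then have "q * n = n + n + q'' * n" using \<open>q = Suc q'\<close> by simp
        then show ?thesis using qn an bn by linarith
      qed
    qed
  qed
  show ?thesis using part1 part2 by (rule conjI)
qed

end
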